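(* Let $P_0,P_1$ be the bivectors on the region of $\mathbb{R}^{2n}$ (coordinates $(q,p)$, $q_i$ pairwise distinct) $$P_0=\sum_{i,j=1}^np_ie^{-|q_i-q_j|}\partial_{p_i}\wedge\partial_{q_j}-\sum_{i<j}\mathrm{sign}(q_i-q_j)p_ip_je^{-|q_i-q_j|}\partial_{p_i}\wedge\partial_{p_j}+\sum_{i<j}\mathrm{sign}(q_i-q_j)(e^{-|q_i-q_j|}-1)\partial_{q_i}\wedge\partial_{q_j},\quad P_1=\sum_{i=1}^n\partial_{p_i}\wedge\partial_{q_i},$$ viewed as maps from 1-forms to vector fields, and let $S=P_1^{-1}\circ P_0$ be the recursion operator on 1-forms. Let $H_0=\sum_ip_i$, $H_1=\frac12\sum_{i,j}p_ip_je^{-|q_i-q_j|}$, and define $H_{i+1}$ for $i\ge1$ by $dH_{i+1}=S^i(dH_1)$. Then each $H_i$ is a polynomial function of $p$ of degree $i+1$.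
   Context: For a bivector $P=\sum P^{ij}\partial_{x_i}\wedge\partial_{x_j}$, the associated map sends a 1-form $\alpha$ to $P(\alpha,\cdot)$. The pair $(P_0,P_1)$ is a bi-Hamiltonian structure with $P_0(dH_0,\cdot)=P_1(dH_1,\cdot)$, so the 1-forms $S^i(dH_1)$ are closed and the $H_i$ are first integrals (defined up to additive constants). *)

theory Defs
  imports "HOL-Analysis.Analysis"
begin

text \<open>Coordinates of R^{2n} are
indexed by 'n + 'n: Inl i is q_i and Inr i is p_i.  Covectors (values of 1-forms)
and vectors (values of vector fields) are given by their components, i.e. as
functions 'n + 'n => real.\<close>

type_synonym 'n point = "(real^'n) \<times> (real^'n)"
type_synonym 'n comps = "'n + 'n \<Rightarrow> real"

definition coord :: "('n::finite) point \<Rightarrow> 'n comps" where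
  "coord x k = (case k of Inl i \<Rightarrow> fst x $ i | Inr i \<Rightarrow> snd x $ i)"

definition cbasis :: "('n::finite) + 'n \<Rightarrow> 'n point" where
  "cbasis k = (case k of Inl i \<Rightarrow> (axis i 1, 0) | Inr i \<Rightarrow> (0, axis i 1))"

definition dform :: "('n::finite point \<Rightarrow> real) \<Rightarrow> 'n point \<Rightarrow> 'n comps" where
  "dform H x = (\<lambda>k. frechet_derivative H (at x) (cbasis k))"

definition has_dform_on ::
  "('n::finite point \<Rightarrow> real) \<Rightarrow> ('n point \<Rightarrow> 'n comps) \<Rightarrow> 'n point set \<Rightarrow> bool" where
  "has_dform_on H \<alpha> U \<longleftrightarrow>
     (\<forall>x\<in>U. (H has_derivative (\<lambda>v. \<Sum>k\<in>UNIV. \<alpha> x k * coord v k)) (at x))"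

text \<open>A bivector field P = sum_{k,l} P^{kl} d_k wedge d_l, given by its coefficient
functions, and its associated map alpha |-> P(alpha, .), using
(d_k wedge d_l)(alpha, .) = alpha_k d_l - alpha_l d_k.\<close>
type_synonym 'n bivector = "'n point \<Rightarrow> 'n + 'n \<Rightarrow> 'n + 'n \<Rightarrow> real"

definition bv_map :: "'n::finite bivector \<Rightarrow> 'n point \<Rightarrow> 'n comps \<Rightarrow> 'n comps" where
  "bv_map P x \<alpha> = (\<lambda>m. (\<Sum>k\<in>UNIV. P x k m * \<alpha> k) - (\<Sum>l\<in>UNIV. P x m l * \<alpha> l))"

abbreviation E :: "('n::finite) point \<Rightarrow> 'n \<Rightarrow> 'n \<Rightarrow> real" where
  "E x i j \<equiv> exp (- \<bar>fst x $ i - fst x $ j\<bar>)"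

definition P0 :: "('n::{finite,linorder}) bivector" where
  "P0 x k l = (case (k, l) of
      (Inr i, Inl j) \<Rightarrow> snd x $ i * E x i j
    | (Inr i, Inr j) \<Rightarrow> (if i < j then - (sgn (fst x $ i - fst x $ j) * snd x $ i * snd x $ j * E x i j) else 0)
    | (Inl i, Inl j) \<Rightarrow> (if i < j then sgn (fst x $ i - fst x $ j) * (E x i j - 1) else 0)
    | (Inl i, Inr j) \<Rightarrow> 0)"

definition P1 :: "('n::finite) bivector" where
  "P1 x k l = (case (k, l) of (Inr i, Inl j) \<Rightarrow> (if i = j then 1 else 0) | _ \<Rightarrow> 0)"

definition S_at :: "('n::{finite,linorder}) point \<Rightarrow> 'n comps \<Rightarrow> 'n comps" where
  "S_at x \<alpha> = (THE \<beta>. bv_map P1 x \<beta> = bv_map P0 x \<alpha>)"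

definition S_op :: "('n::{finite,linorder} point \<Rightarrow> 'n comps) \<Rightarrow> ('n point \<Rightarrow> 'n comps)" where
  "S_op \<alpha> = (\<lambda>x. S_at x (\<alpha> x))"

definition region :: "('n::finite) point set" where
  "region = {x. \<forall>i j. i \<noteq> j \<longrightarrow> fst x $ i \<noteq> fst x $ j}"

definition Ham0 :: "('n::finite) point \<Rightarrow> real" where
  "Ham0 x = (\<Sum>i\<in>UNIV. snd x $ i)"

definition Ham1 :: "('n::finite) point \<Rightarrow> real" where
  "Ham1 x = 1/2 * (\<Sum>i\<in>UNIV. \<Sum>j\<in>UNIV. snd x $ i * snd x $ j * E x i j)"

definition poly_in_p_deg :: "('n::finite point \<Rightarrow> real) \<Rightarrow> 'n point set \<Rightarrow> nat \<Rightarrow> bool" where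
  "poly_in_p_deg H U d \<longleftrightarrow>
     (\<exists>c :: ('n \<Rightarrow> nat) \<Rightarrow> real^'n \<Rightarrow> real.
        (\<forall>x\<in>U. H x = (\<Sum>a\<in>{a. sum a UNIV \<le> d}. c a (fst x) * (\<Prod>i\<in>UNIV. (snd x $ i) ^ a i)))
      \<and> (\<exists>a x. sum a UNIV = d \<and> x \<in> U \<and> c a (fst x) \<noteq> 0))"

end

theory Submission
  imports Defs
begin

definition mon :: "('n \<Rightarrow> nat) \<Rightarrow> ('n::finite) point \<Rightarrow> real" where
  "mon a x = (\<Prod>i\<in>UNIV. (snd x $ i) ^ a i)"

definition HP :: "nat \<Rightarrow> ('n::finite point \<Rightarrow> real) \<Rightarrow> bool" where
  "HP d f \<longleftrightarrow> (\<exists>c::('n\<Rightarrow>nat) \<Rightarrow> real^'n \<Rightarrow> real.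
     \<forall>x\<in>region. f x = (\<Sum>a\<in>{a. sum a UNIV = d}. c a (fst x) * mon a x))"

lemma finite_le: "finite {a::'n::finite \<Rightarrow> nat. sum a UNIV \<le> d}"
proof -
  have "{a::'n \<Rightarrow> nat. sum a UNIV \<le> d} \<subseteq> {f. \<forall>x. (x \<in> UNIV \<longrightarrow> f x \<in> {0..d}) \<and> (x \<notin> UNIV \<longrightarrow> f x = 0)}"
  proof -
    have "\<And>(a::'n\<Rightarrow>nat) i. a i \<le> sum a UNIV" by (rule member_le_sum) auto
    then show ?thesis by (auto intro: order_trans)
  qed
  moreover have "finite {f::'n\<Rightarrow>nat. \<forall>x. (x \<in> UNIV \<longrightarrow> f x \<in> {0..d}) \<and> (x \<notin> UNIV \<longrightarrow> f x = 0)}"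
    by (rule finite_set_of_finite_funs) auto
  ultimately show ?thesis by (rule finite_subset)
qed

lemma finite_eq: "finite {a::'n::finite \<Rightarrow> nat. sum a UNIV = d}"
  by (rule finite_subset[OF _ finite_le[of d]]) auto

lemma HP_cong: "HP d f \<Longrightarrow> (\<And>x. x\<in>region \<Longrightarrow> f x = g x) \<Longrightarrow> HP d g"
  unfolding HP_def by metis

lemma HP_zero: "HP d (\<lambda>x. 0)"
  unfolding HP_def by (rule exI[of _ "\<lambda>a q. 0"]) simp

lemma HP_add: assumes "HP d f" "HP d g" shows "HP d (\<lambda>x. f x + g x)"
proof -
  obtain c1 c2 where c1: "\<forall>x\<in>region. f x = (\<Sum>a\<in>{a. sum a UNIV = d}. c1 a (fst x) * mon a x)"
    and c2: "\<forall>x\<in>region. g x = (\<Sum>a\<in>{a. sum a UNIV = d}. c2 a (fst x) * mon a x)"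
    using assms unfolding HP_def by blast
  show ?thesis unfolding HP_def
    by (rule exI[of _ "\<lambda>a q. c1 a q + c2 a q"]) (simp add: c1 c2 sum.distrib ring_distribs)
qed

lemma HP_qmult: assumes "HP d f" shows "HP d (\<lambda>x. g (fst x) * f x)"
proof -
  obtain c1 where c1: "\<forall>x\<in>region. f x = (\<Sum>a\<in>{a. sum a UNIV = d}. c1 a (fst x) * mon a x)"
    using assms unfolding HP_def by blast
  show ?thesis unfolding HP_def
    by (rule exI[of _ "\<lambda>a q. g q * c1 a q"]) (simp add: c1 sum_distrib_left mult.assoc)
qed

lemma HP_sum: "finite I \<Longrightarrow> (\<And>i. i\<in>I \<Longrightarrow> HP d (f i)) \<Longrightarrow> HP d (\<lambda>x. \<Sum>i\<in>I. f i x)"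
  by (induction I rule: finite_induct) (auto intro: HP_zero HP_add)

lemma HP_neg: "HP d f \<Longrightarrow> HP d (\<lambda>x. - f x)"
  using HP_qmult[of d f "\<lambda>q. -1"] by simp

lemma HP_diff: "HP d f \<Longrightarrow> HP d g \<Longrightarrow> HP d (\<lambda>x. f x - g x)"
  using HP_add[of d f "\<lambda>x. - g x"] HP_neg[of d g] by simp

lemma HP_const: "HP 0 (\<lambda>x. g (fst x))"
proof -
  have "{a::'a\<Rightarrow>nat. sum a UNIV = 0} = {\<lambda>_. 0}" by (auto simp: fun_eq_iff)
  then show ?thesis unfolding HP_def
    by (intro exI[of _ "\<lambda>a q. g q"]) (simp add: mon_def)
qed

lemma sum_upd: "sum (a(j:=v)) (UNIV::'n::finite set) = v + sum a (UNIV - {j})"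
  by (simp add: sum.remove[of UNIV j])

lemma mon_upd: "mon (a(j:=v)) x = (snd x $ j)^v * (\<Prod>i\<in>UNIV-{j}. (snd x $ i) ^ a i)"
  unfolding mon_def by (simp add: prod.remove[of UNIV j])

lemma HP_pmult: assumes "HP d f" shows "HP (Suc d) (\<lambda>x. snd x $ j * f x)"
proof -
  obtain c where c: "\<forall>x\<in>region. f x = (\<Sum>a\<in>{a. sum a UNIV = d}. c a (fst x) * mon a x)"
    using assms unfolding HP_def by blast
  define C where "C e q = (if 0 < e j then c (e(j := e j - 1)) q else 0)" for e q
  show ?thesis unfolding HP_def
  proof (intro exI[of _ C] ballI)
    fix x :: "'a point" assume x: "x \<in> region"
    have "(\<Sum>e\<in>{e. sum e UNIV = Suc d}. C e (fst x) * mon e x)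
        = (\<Sum>e\<in>{e. sum e UNIV = Suc d \<and> 0 < e j}. c (e(j := e j - 1)) (fst x) * mon e x)"
      by (rule sum.mono_neutral_cong_right[OF finite_eq]) (auto simp: C_def)
    also have "\<dots> = (\<Sum>a\<in>{a. sum a UNIV = d}. c a (fst x) * (snd x $ j * mon a x))"
    proof (rule sym, rule sum.reindex_bij_witness[where j="\<lambda>a. a(j := a j + 1)" and i="\<lambda>e. e(j := e j - 1)"])
      fix a :: "'a \<Rightarrow> nat" assume a: "a \<in> {a. sum a UNIV = d}"
      show "(a(j := a j + 1))(j := (a(j := a j + 1)) j - 1) = a" by auto
      have "sum a UNIV = a j + sum a (UNIV - {j})" by (simp add: sum.remove[of UNIV j])
      then show "a(j := a j + 1) \<in> {e. sum e UNIV = Suc d \<and> 0 < e j}" using a unfolding mem_Collect_eq sum_upd by simp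
      have "mon (a(j := a j + 1)) x = snd x $ j * mon (a(j := a j)) x"
        by (simp only: mon_upd) simp
      then show "c ((a(j := a j + 1))(j := (a(j := a j + 1)) j - 1)) (fst x) * mon (a(j := a j + 1)) x =
          c a (fst x) * (snd x $ j * mon a x)" by simp
    next
      fix e :: "'a \<Rightarrow> nat" assume e: "e \<in> {e. sum e UNIV = Suc d \<and> 0 < e j}"
      show "(e(j := e j - 1))(j := (e(j := e j - 1)) j + 1) = e" using e by auto
      have "sum e UNIV = e j + sum e (UNIV - {j})" by (simp add: sum.remove[of UNIV j])
      then show "e(j := e j - 1) \<in> {a. sum a UNIV = d}" using e unfolding mem_Collect_eq sum_upd by simp
    qed
    also have "\<dots> = snd x $ j * f x" using c x by (simp add: sum_distrib_left mult.left_commute)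
    finally show "snd x $ j * f x = (\<Sum>e\<in>{e. sum e UNIV = Suc d}. C e (fst x) * mon e x)" by simp
  qed
qed

lemma region_scale: "x \<in> region \<Longrightarrow> (fst x, v) \<in> region"
  by (simp add: region_def)

lemma HP_hom: assumes "HP d f" "x \<in> region" shows "f (fst x, t *\<^sub>R snd x) = t^d * f x"
proof -
  obtain c where c: "\<forall>x\<in>region. f x = (\<Sum>a\<in>{a. sum a UNIV = d}. c a (fst x) * mon a x)"
    using assms unfolding HP_def by blast
  have m: "mon a (fst x, t *\<^sub>R snd x) = t ^ sum a UNIV * mon a x" for a
    by (simp add: mon_def power_mult_distrib prod.distrib power_sum)
  show ?thesis using c assms(2) region_scale[OF assms(2)]
    by (simp add: m sum_distrib_left mult.left_commute)
qed


lemma sum_PlusU: "(\<Sum>k\<in>(UNIV::('a::finite + 'b::finite) set). f k) = (\<Sum>i\<in>UNIV. f (Inl i)) + (\<Sum>i\<in>UNIV. f (Inr i))"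
  using sum.Plus[of "UNIV::'a set" "UNIV::'b set" f] by (simp add: comp_def)

lemma if10: "(if P then 1 else 0) * (y::real) = (if P then y else 0)" by simp

lemma bvP1: "bv_map P1 x \<beta> = (\<lambda>m. case m of Inl j \<Rightarrow> \<beta> (Inr j) | Inr j \<Rightarrow> - \<beta> (Inl j))"
  by (auto simp: fun_eq_iff bv_map_def sum_PlusU P1_def if10 split: sum.split)

lemma S_at_eq: "S_at x \<alpha> = (\<lambda>m. case m of Inl j \<Rightarrow> - bv_map P0 x \<alpha> (Inr j) | Inr j \<Rightarrow> bv_map P0 x \<alpha> (Inl j))"
  unfolding S_at_def
proof (rule the_equality)
  show "bv_map P1 x (\<lambda>m. case m of Inl j \<Rightarrow> - bv_map P0 x \<alpha> (Inr j) | Inr j \<Rightarrow> bv_map P0 x \<alpha> (Inl j)) = bv_map P0 x \<alpha>"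
    by (auto simp: bvP1 fun_eq_iff split: sum.split)
next
  fix \<beta> assume "bv_map P1 x \<beta> = bv_map P0 x \<alpha>"
  then have "\<And>m. bv_map P1 x \<beta> m = bv_map P0 x \<alpha> m" by simp
  then show "\<beta> = (\<lambda>m. case m of Inl j \<Rightarrow> - bv_map P0 x \<alpha> (Inr j) | Inr j \<Rightarrow> bv_map P0 x \<alpha> (Inl j))"
    unfolding bvP1 by (auto simp: fun_eq_iff split: sum.split sum.split_asm) (metis minus_minus old.sum.simps(5) old.sum.simps(6))+
qed

lemma bvP0_l: "bv_map P0 x \<alpha> (Inl j) = (\<Sum>i\<in>UNIV. P0 x (Inl i) (Inl j) * \<alpha> (Inl i)) + (\<Sum>i\<in>UNIV. P0 x (Inr i) (Inl j) * \<alpha> (Inr i))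
   - ((\<Sum>i\<in>UNIV. P0 x (Inl j) (Inl i) * \<alpha> (Inl i)) + (\<Sum>i\<in>UNIV. P0 x (Inl j) (Inr i) * \<alpha> (Inr i)))"
  by (simp add: bv_map_def sum_PlusU)

lemma bvP0_r: "bv_map P0 x \<alpha> (Inr j) = (\<Sum>i\<in>UNIV. P0 x (Inl i) (Inr j) * \<alpha> (Inl i)) + (\<Sum>i\<in>UNIV. P0 x (Inr i) (Inr j) * \<alpha> (Inr i))
   - ((\<Sum>i\<in>UNIV. P0 x (Inr j) (Inl i) * \<alpha> (Inl i)) + (\<Sum>i\<in>UNIV. P0 x (Inr j) (Inr i) * \<alpha> (Inr i)))"
  by (simp add: bv_map_def sum_PlusU)



lemma P0_lr: "P0 x (Inl i) (Inr j) = 0" by (simp add: P0_def)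

lemma HP_P0_ll: "HP d f \<Longrightarrow> HP d (\<lambda>x. P0 x (Inl i) (Inl j) * f x)"
  by (rule HP_cong[OF HP_qmult[of d f "\<lambda>q. if i<j then sgn (q$i-q$j) * (exp (- \<bar>q$i-q$j\<bar>) - 1) else 0"]])
     (simp_all add: P0_def)

lemma HP_P0_rl: "HP d f \<Longrightarrow> HP (Suc d) (\<lambda>x. P0 x (Inr i) (Inl j) * f x)"
  by (rule HP_cong[OF HP_pmult[OF HP_qmult[of d f "\<lambda>q. exp (- \<bar>q$i-q$j\<bar>)"]], of i])
     (simp_all add: P0_def)

lemma HP_P0_rr: "HP d f \<Longrightarrow> HP (Suc (Suc d)) (\<lambda>x. P0 x (Inr i) (Inr j) * f x)"
  by (rule HP_cong[OF HP_pmult[OF HP_pmult[OF HP_qmult[of d f "\<lambda>q. if i<j then - (sgn (q$i-q$j) * exp (- \<bar>q$i-q$j\<bar>)) else 0"]]], of i j])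
     (simp_all add: P0_def)

definition good :: "nat \<Rightarrow> ('n::finite point \<Rightarrow> 'n comps) \<Rightarrow> bool" where
  "good d \<alpha> \<longleftrightarrow> (\<forall>j. HP (Suc d) (\<lambda>x. \<alpha> x (Inl j))) \<and> (\<forall>j. HP d (\<lambda>x. \<alpha> x (Inr j)))"

lemma good_S: assumes "good d \<alpha>" shows "good (Suc d) (S_op \<alpha>)"
proof -
  have l: "HP (Suc d) (\<lambda>x. \<alpha> x (Inl j))" and r: "HP d (\<lambda>x. \<alpha> x (Inr j))" for j
    using assms by (auto simp: good_def)
  have z: "HP d' (\<lambda>x. P0 x (Inl i) (Inr j) * f x)" for d' i j f
    by (simp add: P0_lr HP_zero)
  show ?thesis unfolding good_def S_op_def S_at_eq
    by (auto simp: bvP0_l bvP0_r intro!: HP_neg HP_diff HP_add HP_sum HP_P0_ll HP_P0_rl HP_P0_rr l r z)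
qed



lemma abs_deriv: assumes "(y::real) \<noteq> 0" shows "(abs has_real_derivative sgn y) (at y)"
proof (cases "y > 0")
  case True
  show ?thesis
    by (rule has_field_derivative_transform_within_open[where f="\<lambda>z. z" and S="{0<..}"])
       (use True in \<open>auto intro: DERIV_ident\<close>)
next
  case False
  with assms have y: "y < 0" by simp
  show ?thesis
    by (rule has_field_derivative_transform_within_open[where f="\<lambda>z. - z" and S="{..<0}"])
       (use y in \<open>auto intro!: derivative_eq_intros\<close>)
qed

lemma hd_nth[derivative_intros]: "(f has_derivative f') F \<Longrightarrow> ((\<lambda>x. f x $ i) has_derivative (\<lambda>v. f' v $ i)) F"
  by (rule bounded_linear.has_derivative[OF bounded_linear_vec_nth])

definition DT :: "'n::finite \<Rightarrow> 'n \<Rightarrow> 'n point \<Rightarrow> 'n point \<Rightarrow> real" where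
  "DT i j x v = (snd v$i * snd x$j + snd x$i * snd v$j) * E x i j
     - snd x$i * snd x$j * E x i j * (sgn (fst x$i - fst x$j) * (fst v$i - fst v$j))"

lemma T_deriv: fixes i j :: "'n::finite" assumes x: "x \<in> region"
  shows "((\<lambda>x. snd x$i * snd x$j * E x i j) has_derivative DT i j x) (at x)"
proof (cases "i = j")
  case True
  have "((\<lambda>x::'n point. snd x$i * snd x$i) has_derivative (\<lambda>v. snd v$i * snd x$i + snd x$i * snd v$i)) (at x)"
    by (auto intro!: derivative_eq_intros)
  moreover have "DT i i x = (\<lambda>v. snd v$i * snd x$i + snd x$i * snd v$i)" by (simp add: DT_def fun_eq_iff)
  ultimately show ?thesis using True by simp
next
  case False
  then have ne: "fst x$i - fst x$j \<noteq> 0" using x by (auto simp: region_def)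
  have lin: "((\<lambda>x::'n point. fst x$i - fst x$j) has_derivative (\<lambda>v. fst v$i - fst v$j)) (at x)"
    by (auto intro!: derivative_eq_intros)
  have ab: "((\<lambda>x::'n point. \<bar>fst x$i - fst x$j\<bar>) has_derivative (\<lambda>v. sgn (fst x$i - fst x$j) * (fst v$i - fst v$j))) (at x)"
    using has_derivative_compose[OF lin abs_deriv[OF ne, unfolded has_field_derivative_def]] by simp
  show ?thesis
    unfolding DT_def
    by (rule derivative_eq_intros ab refl | simp)+ (simp add: algebra_simps)
qed


lemma Ham1_deriv: assumes x: "x \<in> region"
  shows "(Ham1 has_derivative (\<lambda>v. 1/2 * (\<Sum>i\<in>UNIV. \<Sum>j\<in>UNIV. DT i j x v))) (at x)"
  unfolding Ham1_def
  by (intro has_derivative_mult_right has_derivative_sum T_deriv[OF x])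

lemma dform_Ham1: "x \<in> region \<Longrightarrow> dform Ham1 x k = 1/2 * (\<Sum>i\<in>UNIV. \<Sum>j\<in>UNIV. DT i j x (cbasis k))"
  unfolding dform_def using frechet_derivative_at[OF Ham1_deriv] by metis

lemma good1: "good (Suc 0) (dform (Ham1::'n::{finite,linorder} point \<Rightarrow> real))"
proof -
  have a: "HP (Suc (Suc 0)) (\<lambda>x::'n point. DT i j x (cbasis (Inl m)))" for i j m
    by (rule HP_cong[OF HP_pmult[OF HP_pmult[OF HP_const[of "\<lambda>q. -(exp(-\<bar>q$i-q$j\<bar>) * (sgn(q$i-q$j) * ((if i=m then 1 else 0) - (if j=m then 1 else 0))))"]]], of j i])
       (simp add: DT_def cbasis_def axis_def algebra_simps)
  have b: "HP (Suc 0) (\<lambda>x::'n point. DT i j x (cbasis (Inr m)))" for i j m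
    by (rule HP_cong[OF HP_add[OF HP_pmult[OF HP_const[of "\<lambda>q. (if i=m then 1 else 0) * exp(-\<bar>q$i-q$j\<bar>)"]]
              HP_pmult[OF HP_const[of "\<lambda>q. (if j=m then 1 else 0) * exp(-\<bar>q$i-q$j\<bar>)"]]], of j i])
       (simp add: DT_def cbasis_def axis_def algebra_simps)
  have a': "HP (Suc (Suc 0)) (\<lambda>x::'n point. dform Ham1 x (Inl m))" for m
  proof -
    have "HP (Suc (Suc 0)) (\<lambda>x::'n point. (\<lambda>q. 1/2) (fst x) * (\<Sum>i\<in>UNIV. \<Sum>j\<in>UNIV. DT i j x (cbasis (Inl m))))"
      by (rule HP_qmult) (intro HP_sum a finite)
    then show ?thesis by (rule HP_cong) (simp add: dform_Ham1)
  qed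
  have b': "HP (Suc 0) (\<lambda>x::'n point. dform Ham1 x (Inr m))" for m
  proof -
    have "HP (Suc 0) (\<lambda>x::'n point. (\<lambda>q. 1/2) (fst x) * (\<Sum>i\<in>UNIV. \<Sum>j\<in>UNIV. DT i j x (cbasis (Inr m))))"
      by (rule HP_qmult) (intro HP_sum b finite)
    then show ?thesis by (rule HP_cong) (simp add: dform_Ham1)
  qed
  show ?thesis unfolding good_def using a' b' by blast
qed


lemma good_pow: "good (Suc k) ((S_op ^^ k) (dform (Ham1::'n::{finite,linorder} point \<Rightarrow> real)))"
  by (induction k) (simp_all add: good1 good_S)

definition V :: "'n::finite \<Rightarrow> nat \<Rightarrow> ('n point \<Rightarrow> 'n comps) \<Rightarrow> bool" where
  "V i0 k \<alpha> \<longleftrightarrow> (\<forall>q t. (q, axis i0 t) \<in> region \<longrightarrow>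
       (\<forall>m. \<alpha> (q, axis i0 t) (Inl m) = 0) \<and> \<alpha> (q, axis i0 t) (Inr i0) = t ^ Suc k)"

lemma axis_nth': "axis i0 t $ i = (if i = i0 then t else 0)"
  by (simp add: axis_def)

lemma V0: "V i0 0 (dform (Ham1::'n::{finite,linorder} point \<Rightarrow> real))"
  unfolding V_def
proof (intro allI impI conjI)
  fix q t m assume r: "(q, axis i0 t) \<in> (region :: 'n point set)"
  have "DT i j (q, axis i0 t) (cbasis (Inl m)) = 0" for i j
    by (auto simp: DT_def cbasis_def axis_nth')
  then show "dform Ham1 (q, axis i0 t) (Inl m) = 0" by (simp add: dform_Ham1[OF r])
  have "DT i j (q, axis i0 t) (cbasis (Inr i0)) = (if i = i0 then (if j = i0 then 2*t else 0) else 0)" for i j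
    by (auto simp: DT_def cbasis_def axis_nth')
  moreover have "(\<Sum>i\<in>UNIV. \<Sum>j\<in>UNIV. if i = i0 then if j = i0 then 2*t else 0 else (0::real)) = 2*t"
  proof -
    have "(\<Sum>j\<in>UNIV. if i = i0 then if j = i0 then 2*t else 0 else (0::real)) = (if i = i0 then 2*t else 0)" for i
      by (cases "i = i0") simp_all
    then show ?thesis by simp
  qed
  ultimately show "dform Ham1 (q, axis i0 t) (Inr i0) = t ^ Suc 0" by (simp add: dform_Ham1[OF r])
qed

lemma P0rr0: "P0 (q, axis i0 t) (Inr i) (Inr j) = 0"
  by (auto simp: P0_def axis_nth')

lemma VS: assumes "V i0 k \<alpha>" shows "V i0 (Suc k) (S_op \<alpha>)"
  unfolding V_def
proof (intro allI impI conjI)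
  fix q t m assume r: "(q, axis i0 t) \<in> region"
  have z: "\<alpha> (q, axis i0 t) (Inl m) = 0" for m using assms r by (simp add: V_def)
  have o: "\<alpha> (q, axis i0 t) (Inr i0) = t ^ Suc k" using assms r by (simp add: V_def)
  show "S_op \<alpha> (q, axis i0 t) (Inl m) = 0"
    by (simp add: S_op_def S_at_eq bvP0_r z P0rr0 P0_lr)
  have "P0 (q, axis i0 t) (Inr i) (Inl i0) * \<alpha> (q, axis i0 t) (Inr i) = (if i = i0 then t * t ^ Suc k else 0)" for i
    by (simp add: P0_def axis_nth' o)
  then have "(\<Sum>i\<in>UNIV. P0 (q, axis i0 t) (Inr i) (Inl i0) * \<alpha> (q, axis i0 t) (Inr i)) = t * t ^ Suc k"
    by simp
  then show "S_op \<alpha> (q, axis i0 t) (Inr i0) = t ^ Suc (Suc k)"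
    by (simp add: S_op_def S_at_eq bvP0_l z P0_lr)
qed

lemma V_pow: "V i0 k ((S_op ^^ k) (dform (Ham1::'n::{finite,linorder} point \<Rightarrow> real)))"
  by (induction k) (simp_all add: V0 VS)


lemma main_form:
  fixes H :: "'n::{finite,linorder} point \<Rightarrow> real"
  assumes hd: "has_dform_on H \<alpha> region" and g: "good (Suc k) \<alpha>" and x: "x \<in> region"
  shows "H x = H (fst x, 0) + (1 / real (Suc (Suc k))) * (\<Sum>j\<in>UNIV. snd x$j * \<alpha> x (Inr j))"
proof -
  define S where "S = (\<Sum>j\<in>UNIV. snd x$j * \<alpha> x (Inr j))"
  define G where "G t = H (fst x, t *\<^sub>R snd x) - t^Suc (Suc k) / real (Suc (Suc k)) * S" for t
  have hom: "\<alpha> (fst x, t *\<^sub>R snd x) (Inr j) = t^Suc k * \<alpha> x (Inr j)" for j t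
    using HP_hom[OF _ x, of "Suc k" "\<lambda>x. \<alpha> x (Inr j)"] g by (simp add: good_def)
  have dH: "((\<lambda>t. H (fst x, t *\<^sub>R snd x)) has_real_derivative t^Suc k * S) (at t)" for t
  proof -
    let ?y = "(fst x, t *\<^sub>R snd x)"
    have y: "?y \<in> region" using x by (simp add: region_def)
    have HL: "(H has_derivative (\<lambda>v. \<Sum>k\<in>UNIV. \<alpha> ?y k * coord v k)) (at ?y)"
      using hd y by (simp add: has_dform_on_def)
    have ga: "((\<lambda>t. (fst x, t *\<^sub>R snd x)) has_derivative (\<lambda>h. (0, h *\<^sub>R snd x))) (at t)"
      by (auto intro!: derivative_eq_intros)
    have L: "(\<Sum>k\<in>UNIV. \<alpha> ?y k * coord (0, h *\<^sub>R snd x) k) = t^Suc k * S * h" for h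
      by (simp add: sum_PlusU coord_def hom S_def sum_distrib_left sum_distrib_right mult_ac)
    show ?thesis
      unfolding has_field_derivative_def
      using has_derivative_compose[OF ga HL] unfolding L by simp
  qed
  have "\<forall>t. DERIV G t :> 0"
  proof
    fix t
    have "DERIV G t :> t^Suc k * S - (real (Suc (Suc k)) * t^Suc k) / real (Suc (Suc k)) * S"
      unfolding G_def by (rule derivative_eq_intros dH refl | simp)+
    then show "DERIV G t :> 0" by simp
  qed
  then have "G 1 = G 0" by (rule DERIV_isconst_all)
  then show ?thesis by (simp add: G_def S_def)
qed


lemma finish:
  fixes H F :: "'n::{finite,linorder} point \<Rightarrow> real"
  assumes d: "d \<ge> 1" and F: "HP d F" and eq: "\<forall>x\<in>region. H x = g (fst x) + F x"
    and q0: "(q0, v0) \<in> region" and C: "C \<noteq> 0" and val: "F (q0, axis i0 1) = C"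
  shows "poly_in_p_deg H region d"
proof -
  obtain cF where cF: "\<forall>x\<in>region. F x = (\<Sum>a\<in>{a. sum a UNIV = d}. cF a (fst x) * mon a x)"
    using F unfolding HP_def by blast
  define c where "c a q = (if sum a UNIV = 0 then g q else 0) + (if sum a UNIV = d then cF a q else 0)"
    for a :: "'n \<Rightarrow> nat" and q
  have s0: "{a \<in> {a::'n\<Rightarrow>nat. sum a UNIV \<le> d}. sum a UNIV = 0} = {\<lambda>_. 0}"
    by (auto simp: fun_eq_iff)
  have sd: "{a \<in> {a::'n\<Rightarrow>nat. sum a UNIV \<le> d}. sum a UNIV = d} = {a. sum a UNIV = d}"
    by auto
  have rep: "H x = (\<Sum>a\<in>{a. sum a UNIV \<le> d}. c a (fst x) * mon a x)" if x: "x \<in> region" for x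
  proof -
    have "(\<Sum>a\<in>{a. sum a UNIV \<le> d}. c a (fst x) * mon a x)
       = (\<Sum>a\<in>{a. sum a UNIV \<le> d}. if sum a UNIV = 0 then g (fst x) * mon a x else 0)
       + (\<Sum>a\<in>{a. sum a UNIV \<le> d}. if sum a UNIV = d then cF a (fst x) * mon a x else 0)"
    proof -
      have "c a (fst x) * mon a x = (if sum a UNIV = 0 then g (fst x) * mon a x else 0)
         + (if sum a UNIV = d then cF a (fst x) * mon a x else 0)" for a
        by (simp add: c_def ring_distribs)
      then show ?thesis by (simp add: sum.distrib)
    qed
    also have "\<dots> = g (fst x) + F x"
    proof -
      have 1: "(\<Sum>a\<in>{a. sum a UNIV \<le> d}. if sum a UNIV = 0 then g (fst x) * mon a x else 0) = g (fst x)"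
        by (simp only: sum.inter_filter[OF finite_le, symmetric] s0) (simp add: mon_def)
      have 2: "(\<Sum>a\<in>{a. sum a UNIV \<le> d}. if sum a UNIV = d then cF a (fst x) * mon a x else 0) = F x"
        by (simp only: sum.inter_filter[OF finite_le, symmetric] sd) (use cF x in simp)
      show ?thesis by (simp only: 1 2)
    qed
    finally show ?thesis using eq x by simp
  qed
  have nz: "\<exists>a. sum a UNIV = d \<and> cF a q0 \<noteq> 0"
  proof (rule ccontr)
    assume "\<not> ?thesis"
    then have "\<forall>a\<in>{a. sum a UNIV = d}. cF a q0 = 0" by auto
    moreover have "(q0, axis i0 1) \<in> region" using q0 by (simp add: region_def)
    ultimately have "F (q0, axis i0 1) = 0" using cF by simp
    then show False using val C by simp
  qed
  then obtain a where a: "sum a UNIV = d" "cF a q0 \<noteq> 0" by blast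
  have "c a q0 \<noteq> 0" using a d by (simp add: c_def)
  then show ?thesis unfolding poly_in_p_deg_def
    using rep a q0 by (intro exI[of _ c] conjI) (auto simp: mon_def intro!: exI[of _ a] exI[of _ "(q0, v0)"])
qed

lemma region_ne: fixes v0 :: "real^('n::{finite,linorder})" shows "\<exists>q0. (q0, v0) \<in> region"
proof
  show "((\<chi> i. real (card {j. j < i})), v0) \<in> region" unfolding region_def
  proof (clarsimp)
    fix i j :: 'n assume ij: "i \<noteq> j" and e: "card {k. k < i} = card {k. k < j}"
    have lt: "card {k. k < a} < card {k. k < b}" if "a < b" for a b :: 'n
      by (rule psubset_card_mono) (use that in auto)
    from ij have "i < j \<or> j < i" by auto
    then show False using e lt[of i j] lt[of j i] by auto
  qed
qed


lemma sum_if2: "(\<Sum>i\<in>(UNIV::'n::finite set). \<Sum>j\<in>UNIV. if i = i0 then if j = i0 then c else 0 else 0) = (c::real)"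
proof -
  have "(\<Sum>j\<in>(UNIV::'n set). if i = i0 then if j = i0 then c else 0 else (0::real)) = (if i = i0 then c else 0)" for i
    by (cases "i = i0") simp_all
  then show ?thesis by simp
qed

theorem corollary1:
  fixes H :: "nat \<Rightarrow> ('n::{finite,linorder}) point \<Rightarrow> real"
  assumes "\<forall>x\<in>region. H 0 x = Ham0 x"
      and "\<forall>x\<in>region. H 1 x = Ham1 x"
      and "\<forall>i\<ge>1. has_dform_on (H (Suc i)) ((S_op ^^ i) (dform Ham1)) region"
  shows "\<forall>i. poly_in_p_deg (H i) region (i + 1)"
proof
  fix i
  obtain q0 where q0: "(q0, 0) \<in> (region :: 'n point set)" using region_ne by blast
  define i0 :: 'n where "i0 = undefined"
  show "poly_in_p_deg (H i) region (i + 1)"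
  proof (cases i)
    case 0
    have "HP (Suc 0) (\<lambda>x::'n point. \<Sum>j\<in>UNIV. snd x $ j * (\<lambda>q. 1) (fst x))"
      by (intro HP_sum HP_pmult HP_const finite)
    then have F: "HP (Suc 0) (Ham0 :: 'n point \<Rightarrow> real)"
      by (rule HP_cong) (simp add: Ham0_def)
    have v: "Ham0 (q0, axis i0 1) = 1" by (simp add: Ham0_def axis_nth')
    have "poly_in_p_deg (H 0) region (Suc 0)"
      by (rule finish[OF _ F _ q0 _ v, where g="\<lambda>q. 0"]) (use assms(1) in auto)
    then show ?thesis using 0 by simp
  next
    case (Suc k)
    show ?thesis
    proof (cases k)
      case 0
      have "HP (Suc (Suc 0)) (\<lambda>x::'n point. (\<lambda>q. 1/2) (fst x) * (\<Sum>i\<in>UNIV. \<Sum>j\<in>UNIV. snd x $ i * (snd x $ j * (\<lambda>q. exp (- \<bar>q$i - q$j\<bar>)) (fst x))))"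
        by (rule HP_qmult) (intro HP_sum HP_pmult HP_const finite)
      then have F: "HP (Suc (Suc 0)) (Ham1 :: 'n point \<Rightarrow> real)"
        by (rule HP_cong) (simp add: Ham1_def mult_ac)
      have "(if i = i0 then 1 else 0) * (if j = i0 then 1 else 0) * exp (- \<bar>q0 $ i - q0 $ j\<bar>)
          = (if i = i0 then (if j = i0 then 1 else 0) else (0::real))" for i j
        by simp
      then have v: "Ham1 (q0, axis i0 1) = 1/2" by (simp add: Ham1_def axis_nth' sum_if2)
      have "poly_in_p_deg (H 1) region (Suc (Suc 0))"
        by (rule finish[OF _ F _ q0 _ v, where g="\<lambda>q. 0"]) (use assms(2) in auto)
      then show ?thesis using \<open>i = Suc k\<close> 0 by simp
    next
      case (Suc m)
      define \<alpha> where "\<alpha> = (S_op ^^ Suc m) (dform (Ham1 :: 'n point \<Rightarrow> real))"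
      have g: "good (Suc (Suc m)) \<alpha>" unfolding \<alpha>_def by (rule good_pow)
      have hd: "has_dform_on (H (Suc (Suc m))) \<alpha> region" unfolding \<alpha>_def using assms(3)[rule_format, of "Suc m"] by simp
      define F where "F x = (\<lambda>q. 1 / real (Suc (Suc (Suc m)))) (fst x) * (\<Sum>j\<in>UNIV. snd x$j * \<alpha> x (Inr j))" for x :: "'n point"
      have HF: "HP (Suc (Suc (Suc m))) F"
        unfolding F_def using g by (intro HP_qmult HP_sum HP_pmult) (auto simp: good_def)
      have eq: "\<forall>x\<in>region. H (Suc (Suc m)) x = (\<lambda>q. H (Suc (Suc m)) (q, 0)) (fst x) + F x"
        using main_form[OF hd g] by (simp add: F_def)
      have V: "\<alpha> (q0, axis i0 1) (Inr i0) = 1"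
        using V_pow[of i0 "Suc m"] q0 unfolding \<alpha>_def V_def by (simp add: region_def)
      have v: "F (q0, axis i0 1) = 1 / real (Suc (Suc (Suc m)))"
        by (simp add: F_def axis_nth' V if10)
      have "poly_in_p_deg (H (Suc (Suc m))) region (Suc (Suc (Suc m)))"
        by (rule finish[OF _ HF eq q0 _ v]) auto
      then show ?thesis using Suc \<open>i = Suc k\<close> by simp
    qed
  qed
qed

end
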